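(* For every $n\ge1$ and $0\le m<n$, $$S_{n,m}(0121,0132)=S_{n,m}(0121,1032)=S_{n,m}(0122,0132)=S_{n,m}(0122,1032).$$
   Context: An ascent in a sequence $x_1\cdots x_k$ is an index $j$ with $x_j<x_{j+1}$; $\mathrm{asc}$ denotes the number of ascents. An ascent sequence of length $n$ is a sequence $x_1\cdots x_n$ of non-negative integers with $x_1=0$ and $x_i\le \mathrm{asc}(x_1\cdots x_{i-1})+1$ for $1<i\le n$. A sequence $\pi$ contains a pattern $\tau$ (a sequence of non-negative integers) if some subsequence of $\pi$ is order-isomorphic to $\tau$ (same relative order, equal letters to equal letters); otherwise it avoids $\tau$. $\mathcal{S}_{n,m}(T)$ is the set of ascent sequences of length $n$ with exactly $m$ ascents avoiding all patterns in $T$, and $S_{n,m}(T)$ its cardinality. *)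

theory Defs
  imports Main
begin

definition asc :: "nat list \<Rightarrow> nat" where
  "asc xs = card {j. Suc j < length xs \<and> xs ! j < xs ! Suc j}"

definition ascent_seq :: "nat list \<Rightarrow> bool" where
  "ascent_seq xs \<longleftrightarrow>
     (xs \<noteq> [] \<longrightarrow> xs ! 0 = 0) \<and>
     (\<forall>i. 0 < i \<and> i < length xs \<longrightarrow> xs ! i \<le> asc (take i xs) + 1)"

definition order_iso :: "nat list \<Rightarrow> nat list \<Rightarrow> bool" where
  "order_iso xs ys \<longleftrightarrow> length xs = length ys \<and>
     (\<forall>i<length xs. \<forall>j<length xs. (xs ! i < xs ! j \<longleftrightarrow> ys ! i < ys ! j)
                                    \<and> (xs ! i = xs ! j \<longleftrightarrow> ys ! i = ys ! j))"

definition contains :: "nat list \<Rightarrow> nat list \<Rightarrow> bool" where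
  "contains pi tau \<longleftrightarrow> (\<exists>ys. ys \<in> set (subseqs pi) \<and> order_iso ys tau)"

definition avoids :: "nat list \<Rightarrow> nat list \<Rightarrow> bool" where
  "avoids pi tau \<longleftrightarrow> \<not> contains pi tau"

definition S_set :: "nat \<Rightarrow> nat \<Rightarrow> nat list set \<Rightarrow> nat list set" where
  "S_set n m T = {xs. length xs = n \<and> ascent_seq xs \<and> asc xs = m \<and> (\<forall>tau\<in>T. avoids xs tau)}"

definition S_card :: "nat \<Rightarrow> nat \<Rightarrow> nat list set \<Rightarrow> nat" where
  "S_card n m T = card (S_set n m T)"

end

theory Submission
  imports Defs "HOL-Library.Sublist"
begin

lemma all_less4: "(\<forall>i<Suc n. P i) \<longleftrightarrow> P 0 \<and> (\<forall>i<n. P (Suc i))"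
  by (rule All_less_Suc2)

lemma iso4: "order_iso [a,b,c,d] [p,q,r,s] \<longleftrightarrow>
  (a<b \<longleftrightarrow> p<q) \<and> (a<c \<longleftrightarrow> p<r) \<and> (a<d \<longleftrightarrow> p<s) \<and> (b<c \<longleftrightarrow> q<r) \<and> (b<d \<longleftrightarrow> q<s) \<and> (c<d \<longleftrightarrow> r<s)
  \<and> (b<a \<longleftrightarrow> q<p) \<and> (c<a \<longleftrightarrow> r<p) \<and> (d<a \<longleftrightarrow> s<p) \<and> (c<b \<longleftrightarrow> r<q) \<and> (d<b \<longleftrightarrow> s<q) \<and> (d<c \<longleftrightarrow> s<r)
  \<and> (a=b \<longleftrightarrow> p=q) \<and> (a=c \<longleftrightarrow> p=r) \<and> (a=d \<longleftrightarrow> p=s) \<and> (b=c \<longleftrightarrow> q=r) \<and> (b=d \<longleftrightarrow> q=s) \<and> (c=d \<longleftrightarrow> r=s)"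
  unfolding order_iso_def by (simp add: All_less_Suc2 numeral_eq_Suc) (safe; simp_all add: eq_commute)

lemma iso_0121: "order_iso [a,b,c,d] [0,1,2,1] \<longleftrightarrow> a < b \<and> b < c \<and> d = b"
  unfolding iso4 by auto
lemma iso_0132: "order_iso [a,b,c,d] [0,1,3,2] \<longleftrightarrow> a < b \<and> b < d \<and> d < c"
  unfolding iso4 by auto
lemma iso_1032: "order_iso [a,b,c,d] [1,0,3,2] \<longleftrightarrow> b < a \<and> a < d \<and> d < c"
  unfolding iso4 by auto
lemma iso_0122: "order_iso [a,b,c,d] [0,1,2,2] \<longleftrightarrow> a < b \<and> b < c \<and> d = c"
  unfolding iso4 by auto
lemma iso_len4: "order_iso ys [p,q,r,s] \<Longrightarrow> \<exists>a b c d. ys = [a,b,c,d]"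
  unfolding order_iso_def by (cases ys rule: rev_cases; auto simp: numeral_eq_Suc length_Suc_conv)

lemma sw_subseq: "subseq xs ys \<Longrightarrow> sorted_wrt R ys \<Longrightarrow> sorted_wrt R xs"
  by (induction rule: list_emb.induct) (auto dest: list_emb_set)
lemma subseq_drop_mono: "j \<le> i \<Longrightarrow> subseq (drop i xs) (drop j xs)"
proof -
  assume "j \<le> i"
  then have "drop i xs = drop (i - j) (drop j xs)" by simp
  then show ?thesis by (metis suffix_drop suffix_imp_subseq)
qed
lemma subseq_nth_cons: "i < length xs \<Longrightarrow> subseq ys (drop (Suc i) xs) \<Longrightarrow> subseq (xs!i # ys) (drop i xs)"
  by (simp add: Cons_nth_drop_Suc[symmetric])
lemma sub4: "i < j \<Longrightarrow> j < k \<Longrightarrow> k < l \<Longrightarrow> l < length xs \<Longrightarrow> [xs!i, xs!j, xs!k, xs!l] \<in> set (subseqs xs)"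
proof -
  assume a: "i < j" "j < k" "k < l" "l < length xs"
  have 1: "subseq [xs!l] (drop l xs)" using a by (intro subseq_nth_cons) auto
  have 2: "subseq [xs!k, xs!l] (drop k xs)" using a 1 subseq_drop_mono[of "Suc k" l xs]
    by (intro subseq_nth_cons) (auto intro: subseq_order.order_trans)
  have 3: "subseq [xs!j, xs!k, xs!l] (drop j xs)" using a 2 subseq_drop_mono[of "Suc j" k xs]
    by (intro subseq_nth_cons) (auto intro: subseq_order.order_trans)
  have 4: "subseq [xs!i, xs!j, xs!k, xs!l] (drop i xs)" using a 3 subseq_drop_mono[of "Suc i" j xs]
    by (intro subseq_nth_cons) (auto intro: subseq_order.order_trans)
  then have "subseq [xs!i, xs!j, xs!k, xs!l] xs" using subseq_drop_mono[of 0 i xs]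
    by (auto intro: subseq_order.order_trans)
  then show ?thesis by simp
qed

lemma contains_I: "i < j \<Longrightarrow> j < k \<Longrightarrow> k < l \<Longrightarrow> l < length xs \<Longrightarrow>
   order_iso [xs!i, xs!j, xs!k, xs!l] tau \<Longrightarrow> contains xs tau"
  unfolding contains_def using sub4 by blast

lemma contains_E: "contains xs [p,q,r,s] \<Longrightarrow> \<exists>a b c d. subseq [a,b,c,d] xs \<and> order_iso [a,b,c,d] [p,q,r,s]"
  unfolding contains_def using iso_len4 by fastforce

definition Acond :: "nat list \<Rightarrow> bool" where
  "Acond xs = sorted_wrt (\<lambda>a b. b = 0 \<or> a \<le> b) xs"
definition Bcond :: "nat list \<Rightarrow> bool" where
  "Bcond xs = sorted_wrt (\<lambda>a b. b \<le> 1 \<or> a < b) xs"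

lemma A_avoid: assumes "Acond xs"
  shows "avoids xs [0,1,2,1]" "avoids xs [0,1,3,2]" "avoids xs [1,0,3,2]"
proof -
  have h: "\<not> (subseq [a,b,c,d] xs \<and> d \<noteq> 0 \<and> d < c)" for a b c d
  proof
    assume "subseq [a,b,c,d] xs \<and> d \<noteq> 0 \<and> d < c"
    then have "sorted_wrt (\<lambda>a b. b = 0 \<or> a \<le> b) [a,b,c,d]" "d \<noteq> 0" "d < c"
      using sw_subseq assms unfolding Acond_def by blast+
    then show False by simp
  qed
  show "avoids xs [0,1,2,1]" unfolding avoids_def
  proof
    assume "contains xs [0,1,2,1]"
    then obtain a b c d where "subseq [a,b,c,d] xs" "order_iso [a,b,c,d] [0,1,2,1]" using contains_E by blast
    then show False using h[of a b c d] iso_0121[of a b c d] by auto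
  qed
  show "avoids xs [0,1,3,2]" unfolding avoids_def
  proof
    assume "contains xs [0,1,3,2]"
    then obtain a b c d where "subseq [a,b,c,d] xs" "order_iso [a,b,c,d] [0,1,3,2]" using contains_E by blast
    then show False using h[of a b c d] iso_0132[of a b c d] by auto
  qed
  show "avoids xs [1,0,3,2]" unfolding avoids_def
  proof
    assume "contains xs [1,0,3,2]"
    then obtain a b c d where "subseq [a,b,c,d] xs" "order_iso [a,b,c,d] [1,0,3,2]" using contains_E by blast
    then show False using h[of a b c d] iso_1032[of a b c d] by auto
  qed
qed

lemma B_avoid: assumes "Bcond xs"
  shows "avoids xs [0,1,2,2]" "avoids xs [0,1,3,2]" "avoids xs [1,0,3,2]"
proof -
  have h: "\<not> (subseq [a,b,c,d] xs \<and> 2 \<le> d \<and> d \<le> c)" for a b c d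
  proof
    assume "subseq [a,b,c,d] xs \<and> 2 \<le> d \<and> d \<le> c"
    then have "sorted_wrt (\<lambda>a b. b \<le> 1 \<or> a < b) [a,b,c,d]" "2 \<le> d" "d \<le> c"
      using sw_subseq assms unfolding Bcond_def by blast+
    then show False by simp
  qed
  show "avoids xs [0,1,2,2]" unfolding avoids_def
  proof
    assume "contains xs [0,1,2,2]"
    then obtain a b c d where "subseq [a,b,c,d] xs" "order_iso [a,b,c,d] [0,1,2,2]" using contains_E by blast
    then show False using h[of a b c d] iso_0122[of a b c d] by auto
  qed
  show "avoids xs [0,1,3,2]" unfolding avoids_def
  proof
    assume "contains xs [0,1,3,2]"
    then obtain a b c d where "subseq [a,b,c,d] xs" "order_iso [a,b,c,d] [0,1,3,2]" using contains_E by blast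
    then show False using h[of a b c d] iso_0132[of a b c d] by auto
  qed
  show "avoids xs [1,0,3,2]" unfolding avoids_def
  proof
    assume "contains xs [1,0,3,2]"
    then obtain a b c d where "subseq [a,b,c,d] xs" "order_iso [a,b,c,d] [1,0,3,2]" using contains_E by blast
    then show False using h[of a b c d] iso_1032[of a b c d] by auto
  qed
qed
lemma asc_cong:
  assumes "length xs = length ys" "\<And>j. Suc j < length xs \<Longrightarrow> (xs!j < xs!Suc j \<longleftrightarrow> ys!j < ys!Suc j)"
  shows "asc xs = asc ys"
proof -
  have "{j. Suc j < length xs \<and> xs ! j < xs ! Suc j} = {j. Suc j < length ys \<and> ys ! j < ys ! Suc j}"
    using assms by auto
  then show ?thesis unfolding asc_def by simp
qed

lemma asc_take_cong:
  assumes "length xs = length ys" "\<And>j. Suc j < length xs \<Longrightarrow> (xs!j < xs!Suc j \<longleftrightarrow> ys!j < ys!Suc j)"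
  shows "asc (take i xs) = asc (take i ys)"
  using assms by (intro asc_cong) auto

lemma asc_finite: "finite {j. Suc j < length xs \<and> xs ! j < xs ! Suc j}"
  by (rule finite_subset[of _ "{..<length xs}"]) auto

lemma asc_take_mono: "p \<le> i \<Longrightarrow> asc (take p xs) \<le> asc (take i xs)"
  unfolding asc_def by (intro card_mono asc_finite) auto

lemma asc_pos: "1 \<le> asc xs \<Longrightarrow> \<exists>p. Suc p < length xs \<and> xs!p < xs!Suc p"
  unfolding asc_def by (metis (no_types, lifting) Collect_empty_eq card.empty not_one_le_zero)

lemma asc_sorted: assumes "sorted xs" "xs \<noteq> []" shows "asc xs + hd xs \<le> last xs"
proof -
  let ?A = "{j. Suc j < length xs \<and> xs ! j < xs ! Suc j}"
  have inj: "inj_on (\<lambda>j. xs ! Suc j) ?A"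
  proof (rule inj_onI)
    fix j j' assume a: "j \<in> ?A" "j' \<in> ?A" "xs ! Suc j = xs ! Suc j'"
    show "j = j'"
    proof (rule ccontr)
      assume "j \<noteq> j'"
      then consider "j < j'" | "j' < j" by linarith
      then show False
      proof cases
        case 1
        then have "xs ! Suc j \<le> xs ! j'" using a assms(1) by (intro sorted_nth_mono) auto
        then show ?thesis using a by auto
      next
        case 2
        then have "xs ! Suc j' \<le> xs ! j" using a assms(1) by (intro sorted_nth_mono) auto
        then show ?thesis using a by auto
      qed
    qed
  qed
  have sub: "(\<lambda>j. xs ! Suc j) ` ?A \<subseteq> {hd xs<..last xs}"
  proof
    fix y assume "y \<in> (\<lambda>j. xs ! Suc j) ` ?A"
    then obtain j where j: "Suc j < length xs" "xs ! j < xs ! Suc j" "y = xs ! Suc j" by auto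
    have "xs ! 0 \<le> xs ! j" using assms j by (intro sorted_nth_mono) auto
    moreover have "xs ! Suc j \<le> xs ! (length xs - 1)" using assms j by (intro sorted_nth_mono) auto
    ultimately show "y \<in> {hd xs<..last xs}" using j assms(2)
      by (auto simp: hd_conv_nth last_conv_nth)
  qed
  have "asc xs = card ((\<lambda>j. xs ! Suc j) ` ?A)" unfolding asc_def using inj by (simp add: card_image)
  also have "\<dots> \<le> card {hd xs<..last xs}" using sub by (intro card_mono) auto
  also have "\<dots> = last xs - hd xs" by simp
  finally have "asc xs \<le> last xs - hd xs" .
  moreover have "xs ! 0 \<le> xs ! (length xs - 1)" using assms by (intro sorted_nth_mono) auto
  then have "hd xs \<le> last xs" using assms(2) by (simp add: hd_conv_nth last_conv_nth)
  ultimately show ?thesis by linarith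
qed

lemma ascent_seq_0: "ascent_seq xs \<Longrightarrow> 0 < length xs \<Longrightarrow> xs ! 0 = 0"
  unfolding ascent_seq_def by auto

lemma ascent_seq_bound: "ascent_seq xs \<Longrightarrow> 0 < j \<Longrightarrow> j < length xs \<Longrightarrow> xs ! j \<le> asc (take j xs) + 1"
  unfolding ascent_seq_def by auto

lemma asc_pair:
  assumes "ascent_seq xs" "0 < j0" "j0 < length xs" "2 \<le> xs ! j0"
  shows "\<exists>p. Suc p < j0 \<and> xs!p < xs!Suc p"
proof -
  have "1 \<le> asc (take j0 xs)" using ascent_seq_bound[OF assms(1-3)] assms(4) by linarith
  from asc_pos[OF this] obtain p where "Suc p < length (take j0 xs)" "take j0 xs ! p < take j0 xs ! Suc p"
    by blast
  then show ?thesis using assms by auto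
qed

lemma desc_pair:
  assumes "ascent_seq xs" "0 < j0" "j0 < length xs" "\<forall>i<j0. xs!i < v" "v < xs ! j0"
  shows "\<exists>p q. p < q \<and> q < j0 \<and> xs!q < xs!p"
proof (rule ccontr)
  assume na: "\<not> ?thesis"
  let ?t = "take j0 xs"
  have "sorted ?t"
    unfolding sorted_iff_nth_mono
  proof (intro allI impI)
    fix i j assume "i \<le> j" "j < length ?t"
    show "?t ! i \<le> ?t ! j"
    proof (cases "i = j")
      case False
      then have "i < j" using \<open>i \<le> j\<close> by simp
      then have "\<not> xs ! j < xs ! i" using na \<open>j < length ?t\<close> by auto
      then show ?thesis using \<open>i < j\<close> \<open>j < length ?t\<close> by simp
    qed simp
  qed
  moreover have ne: "?t \<noteq> []" using assms by auto
  ultimately have "asc ?t + hd ?t \<le> last ?t" by (rule asc_sorted)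
  moreover have "last ?t < v" using assms ne by (auto simp: last_conv_nth)
  moreover have "xs ! j0 \<le> asc ?t + 1" using ascent_seq_bound[OF assms(1-3)] .
  ultimately show False using assms(5) by linarith
qed

lemma A_core:
  assumes "ascent_seq xs" "\<not> Acond xs"
  shows "contains xs [0,1,2,1] \<or> (contains xs [0,1,3,2] \<and> contains xs [1,0,3,2])"
proof -
  obtain j k where jk: "j < k" "k < length xs" "xs!k \<noteq> 0" "xs!k < xs!j"
    using assms(2) unfolding Acond_def sorted_wrt_iff_nth_less by auto
  define v where "v = xs ! k"
  define j0 where "j0 = (LEAST j. v < xs ! j)"
  have j0: "v < xs ! j0" "j0 \<le> j" unfolding j0_def v_def using jk
    by (auto intro: LeastI Least_le)
  have below: "\<forall>i<j0. xs ! i \<le> v" unfolding j0_def using not_less_Least[where P="\<lambda>j. v < xs ! j"] by (auto simp: not_less)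
  have len0: "0 < length xs" using jk by auto
  have x0: "xs ! 0 = 0" using ascent_seq_0[OF assms(1) len0] .
  have j0pos: "0 < j0" using j0 x0 by (cases j0) auto
  have j0k: "j0 < k" using j0 jk by auto
  have vpos: "0 < v" using jk v_def by auto
  show ?thesis
  proof (cases "\<exists>i<j0. xs ! i = v")
    case True
    then obtain i where i: "i < j0" "xs ! i = v" by blast
    have "0 < i" using i x0 vpos by (cases i) auto
    have "contains xs [0,1,2,1]"
      by (rule contains_I[of 0 i j0 k]) (use i \<open>0 < i\<close> j0k jk x0 j0 vpos v_def in \<open>auto simp: iso_0121 iso_0121[simplified]\<close>)
    then show ?thesis by blast
  next
    case False
    then have lt: "\<forall>i<j0. xs ! i < v" using below by (auto simp: le_less)
    have j0len: "j0 < length xs" using j0k jk by auto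
    obtain p where p: "Suc p < j0" "xs!p < xs!Suc p"
      using asc_pair[OF assms(1) j0pos j0len] j0 vpos by auto
    have c1: "contains xs [0,1,3,2]"
      by (rule contains_I[of p "Suc p" j0 k]) (use p lt j0 j0k jk v_def in \<open>auto simp: iso_0132 iso_0132[simplified]\<close>)
    obtain p q where pq: "p < q" "q < j0" "xs!q < xs!p"
      using desc_pair[OF assms(1) j0pos j0len lt j0(1)] by blast
    have c2: "contains xs [1,0,3,2]"
      by (rule contains_I[of p q j0 k]) (use pq lt j0 j0k jk v_def in \<open>auto simp: iso_1032 iso_1032[simplified]\<close>)
    show ?thesis using c1 c2 by blast
  qed
qed

lemma B_core:
  assumes "ascent_seq xs" "\<not> Bcond xs"
  shows "(contains xs [0,1,2,2] \<or> contains xs [0,1,3,2]) \<and> (contains xs [0,1,2,2] \<or> contains xs [1,0,3,2])"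
proof -
  obtain j k where jk: "j < k" "k < length xs" "2 \<le> xs!k" "xs!k \<le> xs!j"
    using assms(2) unfolding Bcond_def sorted_wrt_iff_nth_less by (auto simp: not_le not_less)
  define v where "v = xs ! k"
  define j0 where "j0 = (LEAST j. v \<le> xs ! j)"
  have j0: "v \<le> xs ! j0" "j0 \<le> j" unfolding j0_def v_def using jk
    by (auto intro: LeastI Least_le)
  have lt: "\<forall>i<j0. xs ! i < v" unfolding j0_def using not_less_Least[where P="\<lambda>j. v \<le> xs ! j"] by (auto simp: not_le)
  have len0: "0 < length xs" using jk by auto
  have x0: "xs ! 0 = 0" using ascent_seq_0[OF assms(1) len0] .
  have v2: "2 \<le> v" using jk v_def by auto
  have j0pos: "0 < j0" using j0 x0 v2 by (cases j0) auto
  have j0k: "j0 < k" using j0 jk by auto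
  have j0len: "j0 < length xs" using j0k jk by auto
  obtain p where p: "Suc p < j0" "xs!p < xs!Suc p"
    using asc_pair[OF assms(1) j0pos j0len] j0 v2 by auto
  show ?thesis
  proof (cases "xs ! j0 = v")
    case True
    have "contains xs [0,1,2,2]"
      by (rule contains_I[of p "Suc p" j0 k]) (use p lt True j0k jk v_def in \<open>auto simp: iso_0122 iso_0122[simplified]\<close>)
    then show ?thesis by blast
  next
    case False
    then have gt: "v < xs ! j0" using j0 by auto
    have c1: "contains xs [0,1,3,2]"
      by (rule contains_I[of p "Suc p" j0 k]) (use p lt gt j0k jk v_def in \<open>auto simp: iso_0132 iso_0132[simplified]\<close>)
    obtain p q where pq: "p < q" "q < j0" "xs!q < xs!p"
      using desc_pair[OF assms(1) j0pos j0len lt gt] by blast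
    have c2: "contains xs [1,0,3,2]"
      by (rule contains_I[of p q j0 k]) (use pq lt gt j0k jk v_def in \<open>auto simp: iso_1032 iso_1032[simplified]\<close>)
    show ?thesis using c1 c2 by blast
  qed
qed
definition pm :: "nat list \<Rightarrow> nat \<Rightarrow> nat" where
  "pm xs i = Max (insert 0 (set (take i xs)))"

lemma pm_ge: "p < i \<Longrightarrow> p < length xs \<Longrightarrow> xs ! p \<le> pm xs i"
  unfolding pm_def by (intro Max_ge) (auto simp: in_set_conv_nth intro!: exI[of _ p])

lemma pm_le: "(\<And>p. p < i \<Longrightarrow> p < length xs \<Longrightarrow> xs ! p \<le> c) \<Longrightarrow> pm xs i \<le> c"
  unfolding pm_def by (subst Max_le_iff) (auto simp: in_set_conv_nth)

lemma pm_0: "pm xs 0 = 0"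
  unfolding pm_def by simp

lemma pm_Suc: "i < length xs \<Longrightarrow> pm xs (Suc i) = max (pm xs i) (xs ! i)"
proof -
  assume i: "i < length xs"
  have "set (take (Suc i) xs) = insert (xs!i) (set (take i xs))" using i by (simp add: take_Suc_conv_app_nth)
  then have "pm xs (Suc i) = Max (insert (xs!i) (insert 0 (set (take i xs))))"
    unfolding pm_def by (simp add: insert_commute)
  also have "\<dots> = max (xs!i) (pm xs i)" unfolding pm_def by (rule Max_insert) auto
  finally show ?thesis by (simp add: max.commute)
qed

definition phi :: "nat list \<Rightarrow> nat list" where
  "phi xs = map (\<lambda>i. if xs!i \<noteq> 0 \<and> xs!i = pm xs i then 1 else xs!i) [0..<length xs]"
definition psi :: "nat list \<Rightarrow> nat list" where
  "psi xs = map (\<lambda>i. if xs!i = 1 then max 1 (pm xs i) else xs!i) [0..<length xs]"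

lemma length_phi[simp]: "length (phi xs) = length xs" unfolding phi_def by simp
lemma length_psi[simp]: "length (psi xs) = length xs" unfolding psi_def by simp
lemma nth_phi: "i < length xs \<Longrightarrow> phi xs ! i = (if xs!i \<noteq> 0 \<and> xs!i = pm xs i then 1 else xs!i)"
  unfolding phi_def by simp
lemma nth_psi: "i < length xs \<Longrightarrow> psi xs ! i = (if xs!i = 1 then max 1 (pm xs i) else xs!i)"
  unfolding psi_def by simp

lemma pm_phi: "i \<le> length xs \<Longrightarrow> pm (phi xs) i = pm xs i"
proof (induction i)
  case 0 then show ?case by (simp add: pm_0)
next
  case (Suc i)
  then have i: "i < length xs" by simp
  have "pm (phi xs) (Suc i) = max (pm xs i) (phi xs ! i)"
    using Suc i by (simp add: pm_Suc)
  also have "\<dots> = max (pm xs i) (xs ! i)" using i by (auto simp: nth_phi max_def)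
  also have "\<dots> = pm xs (Suc i)" using i by (simp add: pm_Suc)
  finally show ?case .
qed

lemma pm_psi: "i \<le> length xs \<Longrightarrow> pm (psi xs) i = pm xs i"
proof (induction i)
  case 0 then show ?case by (simp add: pm_0)
next
  case (Suc i)
  then have i: "i < length xs" by simp
  have "pm (psi xs) (Suc i) = max (pm xs i) (psi xs ! i)"
    using Suc i by (simp add: pm_Suc)
  also have "\<dots> = max (pm xs i) (xs ! i)" using i by (auto simp: nth_psi max_def)
  also have "\<dots> = pm xs (Suc i)" using i by (simp add: pm_Suc)
  finally show ?case .
qed

lemma Acond_pm: "Acond xs \<longleftrightarrow> (\<forall>i<length xs. xs!i = 0 \<or> pm xs i \<le> xs!i)"
proof
  assume A: "Acond xs"
  show "\<forall>i<length xs. xs!i = 0 \<or> pm xs i \<le> xs!i"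
  proof (intro allI impI)
    fix i assume i: "i < length xs"
    show "xs!i = 0 \<or> pm xs i \<le> xs!i"
    proof (cases "xs ! i = 0")
      case False
      have "pm xs i \<le> xs ! i"
      proof (rule pm_le)
        fix p assume "p < i" "p < length xs"
        then have "xs!i = 0 \<or> xs!p \<le> xs!i" using A i by (auto simp: Acond_def sorted_wrt_iff_nth_less)
        then show "xs!p \<le> xs!i" using False by simp
      qed
      then show ?thesis by blast
    qed simp
  qed
next
  assume h: "\<forall>i<length xs. xs!i = 0 \<or> pm xs i \<le> xs!i"
  show "Acond xs" unfolding Acond_def sorted_wrt_iff_nth_less
  proof (intro allI impI)
    fix i j assume "i < j" "j < length xs"
    then show "xs ! j = 0 \<or> xs ! i \<le> xs ! j" using h pm_ge[of i j xs] by force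
  qed
qed

lemma Bcond_pm: "Bcond xs \<longleftrightarrow> (\<forall>i<length xs. xs!i \<le> 1 \<or> pm xs i < xs!i)"
proof
  assume B: "Bcond xs"
  show "\<forall>i<length xs. xs!i \<le> 1 \<or> pm xs i < xs!i"
  proof (intro allI impI)
    fix i assume i: "i < length xs"
    show "xs!i \<le> 1 \<or> pm xs i < xs!i"
    proof (cases "xs ! i \<le> 1")
      case False
      have "pm xs i \<le> xs ! i - 1"
      proof (rule pm_le)
        fix p assume "p < i" "p < length xs"
        then have "xs!i \<le> 1 \<or> xs!p < xs!i" using B i by (auto simp: Bcond_def sorted_wrt_iff_nth_less)
        then show "xs!p \<le> xs!i - 1" using False by simp
      qed
      then show ?thesis using False by auto
    qed simp
  qed
next
  assume h: "\<forall>i<length xs. xs!i \<le> 1 \<or> pm xs i < xs!i"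
  show "Bcond xs" unfolding Bcond_def sorted_wrt_iff_nth_less
  proof (intro allI impI)
    fix i j assume "i < j" "j < length xs"
    then show "xs ! j \<le> 1 \<or> xs ! i < xs ! j" using h pm_ge[of i j xs] by force
  qed
qed

lemma arithA: "a = 0 \<or> P \<le> a \<Longrightarrow> b = 0 \<or> max P a \<le> b \<Longrightarrow>
  (a<b) = ((if a\<noteq>0 \<and> a=P then 1 else a) < (if b\<noteq>0 \<and> b = max P a then 1 else (b::nat)))"
  by (cases "a \<le> P") (auto simp: max_def)
lemma arithB: "a \<le> 1 \<or> P < a \<Longrightarrow> b \<le> 1 \<or> max P a < b \<Longrightarrow>
  (a<b) = ((if a=1 then max 1 P else a) < (if b = 1 then max 1 (max P a) else (b::nat)))"
  by (cases "a \<le> P") (auto simp: max_def)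

lemma phi_asc_iff:
  assumes "Acond xs" "Suc j < length xs"
  shows "xs!j < xs!Suc j \<longleftrightarrow> phi xs ! j < phi xs ! Suc j"
proof -
  have a: "xs!j = 0 \<or> pm xs j \<le> xs!j" and b: "xs!Suc j = 0 \<or> pm xs (Suc j) \<le> xs!Suc j"
    using assms unfolding Acond_pm by auto
  have M: "pm xs (Suc j) = max (pm xs j) (xs!j)" using assms by (simp add: pm_Suc)
  show ?thesis using arithA[OF a b[unfolded M]] assms by (simp add: nth_phi M)
qed

lemma psi_asc_iff:
  assumes "Bcond xs" "Suc j < length xs"
  shows "xs!j < xs!Suc j \<longleftrightarrow> psi xs ! j < psi xs ! Suc j"
proof -
  have a: "xs!j \<le> 1 \<or> pm xs j < xs!j" and b: "xs!Suc j \<le> 1 \<or> pm xs (Suc j) < xs!Suc j"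
    using assms unfolding Bcond_pm by auto
  have M: "pm xs (Suc j) = max (pm xs j) (xs!j)" using assms by (simp add: pm_Suc)
  show ?thesis using arithB[OF a b[unfolded M]] assms by (simp add: nth_psi M)
qed
lemma phi_props:
  assumes "ascent_seq xs" "Acond xs"
  shows "ascent_seq (phi xs)" "asc (phi xs) = asc xs" "Bcond (phi xs)" "psi (phi xs) = xs"
proof -
  have iff: "\<And>j. Suc j < length xs \<Longrightarrow> (xs!j < xs!Suc j \<longleftrightarrow> phi xs ! j < phi xs ! Suc j)"
    using phi_asc_iff[OF assms(2)] by blast
  have tk: "asc (take i (phi xs)) = asc (take i xs)" for i
    using asc_take_cong[of xs "phi xs" i] iff by simp
  show "asc (phi xs) = asc xs" using tk[of "length xs"] by simp
  have le: "phi xs ! i \<le> xs ! i" if "i < length xs" for i using that by (simp add: nth_phi)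
  show "ascent_seq (phi xs)" unfolding ascent_seq_def
  proof (intro conjI allI impI)
    assume "phi xs \<noteq> []"
    then have "0 < length xs" by (metis length_greater_0_conv length_phi)
    then show "phi xs ! 0 = 0" using ascent_seq_0[OF assms(1)] by (simp add: nth_phi pm_0)
  next
    fix i assume i: "0 < i \<and> i < length (phi xs)"
    then show "phi xs ! i \<le> asc (take i (phi xs)) + 1"
      using le[of i] ascent_seq_bound[OF assms(1), of i] tk[of i] by simp
  qed
  have Ap: "\<forall>i<length xs. xs!i = 0 \<or> pm xs i \<le> xs!i" using assms(2) Acond_pm by blast
  show "Bcond (phi xs)" unfolding Bcond_pm
  proof (intro allI impI)
    fix i assume i: "i < length (phi xs)"
    then show "phi xs ! i \<le> 1 \<or> pm (phi xs) i < phi xs ! i"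
      using Ap pm_phi[of i xs] by (auto simp: nth_phi)
  qed
  show "psi (phi xs) = xs"
  proof (rule nth_equalityI)
    fix i assume i: "i < length (psi (phi xs))"
    then show "psi (phi xs) ! i = xs ! i"
      using Ap pm_phi[of i xs] by (auto simp: nth_phi nth_psi max_def)
  qed simp
qed

lemma psi_props:
  assumes "ascent_seq xs" "Bcond xs"
  shows "ascent_seq (psi xs)" "asc (psi xs) = asc xs" "Acond (psi xs)" "phi (psi xs) = xs"
proof -
  have iff: "\<And>j. Suc j < length xs \<Longrightarrow> (xs!j < xs!Suc j \<longleftrightarrow> psi xs ! j < psi xs ! Suc j)"
    using psi_asc_iff[OF assms(2)] by blast
  have tk: "asc (take i (psi xs)) = asc (take i xs)" for i
    using asc_take_cong[of xs "psi xs" i] iff by simp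
  show "asc (psi xs) = asc xs" using tk[of "length xs"] by simp
  have pmb: "pm xs i \<le> asc (take i xs) + 1" for i
  proof (rule pm_le)
    fix p assume p: "p < i" "p < length xs"
    show "xs ! p \<le> asc (take i xs) + 1"
    proof (cases p)
      case 0 then show ?thesis using ascent_seq_0[OF assms(1)] p by simp
    next
      case (Suc q)
      then have "xs ! p \<le> asc (take p xs) + 1" using ascent_seq_bound[OF assms(1)] p by simp
      also have "\<dots> \<le> asc (take i xs) + 1" using asc_take_mono[of p i xs] p by simp
      finally show ?thesis .
    qed
  qed
  show "ascent_seq (psi xs)" unfolding ascent_seq_def
  proof (intro conjI allI impI)
    assume "psi xs \<noteq> []"
    then have "0 < length xs" by (metis length_greater_0_conv length_psi)
    then show "psi xs ! 0 = 0" using ascent_seq_0[OF assms(1)] by (simp add: nth_psi)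
  next
    fix i assume i: "0 < i \<and> i < length (psi xs)"
    then show "psi xs ! i \<le> asc (take i (psi xs)) + 1"
      using ascent_seq_bound[OF assms(1), of i] tk[of i] pmb[of i] by (simp add: nth_psi)
  qed
  have Bp: "\<forall>i<length xs. xs!i \<le> 1 \<or> pm xs i < xs!i" using assms(2) Bcond_pm by blast
  show "Acond (psi xs)" unfolding Acond_pm
  proof (intro allI impI)
    fix i assume i: "i < length (psi xs)"
    then show "psi xs ! i = 0 \<or> pm (psi xs) i \<le> psi xs ! i"
      using Bp pm_psi[of i xs] by (auto simp: nth_psi)
  qed
  show "phi (psi xs) = xs"
  proof (rule nth_equalityI)
    fix i assume i: "i < length (phi (psi xs))"
    then show "phi (psi xs) ! i = xs ! i"
      using Bp pm_psi[of i xs] by (auto simp: nth_phi nth_psi max_def)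
  qed simp
qed

lemma SA1: "S_set n m {[0,1,2,1], [0,1,3,2]} = {xs. length xs = n \<and> ascent_seq xs \<and> asc xs = m \<and> Acond xs}"
  unfolding S_set_def using A_avoid A_core unfolding avoids_def by blast
lemma SA2: "S_set n m {[0,1,2,1], [1,0,3,2]} = {xs. length xs = n \<and> ascent_seq xs \<and> asc xs = m \<and> Acond xs}"
  unfolding S_set_def using A_avoid A_core unfolding avoids_def by blast
lemma SB1: "S_set n m {[0,1,2,2], [0,1,3,2]} = {xs. length xs = n \<and> ascent_seq xs \<and> asc xs = m \<and> Bcond xs}"
  unfolding S_set_def using B_avoid B_core unfolding avoids_def by blast
lemma SB2: "S_set n m {[0,1,2,2], [1,0,3,2]} = {xs. length xs = n \<and> ascent_seq xs \<and> asc xs = m \<and> Bcond xs}"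
  unfolding S_set_def using B_avoid B_core unfolding avoids_def by blast

lemma AB_card: "card {xs. length xs = n \<and> ascent_seq xs \<and> asc xs = m \<and> Acond xs}
  = card {xs. length xs = n \<and> ascent_seq xs \<and> asc xs = m \<and> Bcond xs}"
proof (rule bij_betw_same_card[of phi])
  show "bij_betw phi {xs. length xs = n \<and> ascent_seq xs \<and> asc xs = m \<and> Acond xs}
                     {xs. length xs = n \<and> ascent_seq xs \<and> asc xs = m \<and> Bcond xs}"
    by (rule bij_betw_byWitness[where f'=psi]) (auto simp: phi_props psi_props)
qed

theorem proposition2:
  fixes n m :: nat
  assumes "1 \<le> n" and "m < n"
  shows "S_card n m {[0,1,2,1], [0,1,3,2]} = S_card n m {[0,1,2,1], [1,0,3,2]}
       \<and> S_card n m {[0,1,2,1], [1,0,3,2]} = S_card n m {[0,1,2,2], [0,1,3,2]}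
       \<and> S_card n m {[0,1,2,2], [0,1,3,2]} = S_card n m {[0,1,2,2], [1,0,3,2]}"
  unfolding S_card_def SA1 SA2 SB1 SB2 using AB_card by simp

end
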